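(* For $x,y\ge 1$ with $x\ne y$ and $n>\max(x,y)$, the $(x,y)$ edge-addition process on $n$ vertices does not necessarily result in an $(x,y)$ task-dependency graph; that is, with positive probability its result is not an $(x,y)$ task-dependency graph.
   Context: A task-dependency graph is a finite directed acyclic graph (no loops, no multiple edges). A vertex is initial if it has in-degree $0$ and terminal if it has out-degree $0$ (an isolated vertex is both). An $(x,y)$ task-dependency graph has exactly $x$ initial and exactly $y$ terminal vertices. The $(x,y)$ edge-addition process on $n$ vertices: start with the empty graph on $\{1,\dots,n\}$ and repeatedly add, uniformly at random, an edge $(a,b)$ with $a<b$ not yet present; if an addition would cause fewer than $x$ initial vertices or fewer than $y$ terminal vertices, it is cancelled. The process halts if the graph after some edge addition is an $(x,y)$ task-dependency graph, or if no more edges can be added; the result is the final graph. *)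

theory Defs
  imports "HOL-Probability.Probability"
begin

text \<open>Graphs on the vertex set {1..n}; an edge (a,b) always satisfies a < b,
  so every such graph is a DAG without loops or multiple edges.\<close>

definition all_pairs :: "nat \<Rightarrow> (nat \<times> nat) set" where
  "all_pairs n = {(a, b). 1 \<le> a \<and> a < b \<and> b \<le> n}"

definition initial_vertices :: "nat \<Rightarrow> (nat \<times> nat) set \<Rightarrow> nat set" where
  "initial_vertices n E = {v \<in> {1..n}. \<not> (\<exists>u. (u, v) \<in> E)}"

definition terminal_vertices :: "nat \<Rightarrow> (nat \<times> nat) set \<Rightarrow> nat set" where
  "terminal_vertices n E = {v \<in> {1..n}. \<not> (\<exists>w. (v, w) \<in> E)}"

definition is_tdg :: "nat \<Rightarrow> nat \<Rightarrow> nat \<Rightarrow> (nat \<times> nat) set \<Rightarrow> bool" where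
  "is_tdg n x y E \<longleftrightarrow> E \<subseteq> all_pairs n \<and>
     card (initial_vertices n E) = x \<and> card (terminal_vertices n E) = y"

text \<open>Edges whose addition is not cancelled.\<close>
definition addable :: "nat \<Rightarrow> nat \<Rightarrow> nat \<Rightarrow> (nat \<times> nat) set \<Rightarrow> (nat \<times> nat) set" where
  "addable n x y E = {e \<in> all_pairs n - E.
      x \<le> card (initial_vertices n (insert e E)) \<and> y \<le> card (terminal_vertices n (insert e E))}"

lemma finite_all_pairs: "finite (all_pairs n)"
proof -
  have "all_pairs n \<subseteq> {1..n} \<times> {1..n}" by (auto simp: all_pairs_def)
  then show ?thesis by (rule finite_subset) simp
qed

lemma finite_addable: "finite (addable n x y E)"
  by (rule finite_subset[OF _ finite_all_pairs]) (auto simp: addable_def)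

function edge_process :: "nat \<Rightarrow> nat \<Rightarrow> nat \<Rightarrow> (nat \<times> nat) set \<Rightarrow> (nat \<times> nat) set pmf" where
  "edge_process n x y E =
     (if addable n x y E = {} then return_pmf E
      else pmf_of_set (addable n x y E) \<bind>
        (\<lambda>e. if is_tdg n x y (insert e E) then return_pmf (insert e E)
             else edge_process n x y (insert e E)))"
  by auto
termination
proof (relation "Wellfounded.measure (\<lambda>(n, x, y, E). card (all_pairs n - E))")
  fix n x y :: nat and E :: "(nat \<times> nat) set" and e
  assume ne: "addable n x y E \<noteq> {}" and e: "e \<in> set_pmf (pmf_of_set (addable n x y E))"
  then have "e \<in> addable n x y E" using finite_addable by simp
  then have "e \<in> all_pairs n - E" by (simp add: addable_def)
  then have "all_pairs n - insert e E \<subset> all_pairs n - E" by auto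
  then have "card (all_pairs n - insert e E) < card (all_pairs n - E)"
    by (rule psubset_card_mono[rotated]) (simp add: finite_all_pairs)
  then show "((n, x, y, insert e E), n, x, y, E) \<in> Wellfounded.measure (\<lambda>(n, x, y, E). card (all_pairs n - E))"
    by simp
qed auto

end

theory Submission
  imports Defs
begin

lemma reach:
  assumes F: "F \<subseteq> all_pairs n"
    and add: "\<And>S e. S \<subseteq> F \<Longrightarrow> e \<in> F \<Longrightarrow> e \<notin> S \<Longrightarrow> e \<in> addable n x y S"
    and ntdg: "\<And>S. S \<subseteq> F \<Longrightarrow> \<not> is_tdg n x y S"
    and stuck: "addable n x y F = {}"
  shows "S \<subseteq> F \<Longrightarrow> F \<in> set_pmf (edge_process n x y S)"
proof (induction "card (F - S)" arbitrary: S rule: less_induct)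
  case less
  have finF: "finite F" using F finite_all_pairs finite_subset by blast
  show ?case
  proof (cases "S = F")
    case True
    then show ?thesis by (subst edge_process.simps) (simp add: stuck del: edge_process.simps)
  next
    case False
    then obtain e where e: "e \<in> F" "e \<notin> S" using less.prems by blast
    have eA: "e \<in> addable n x y S" using add[OF less.prems e] .
    then have ne: "addable n x y S \<noteq> {}" by blast
    have sub: "insert e S \<subseteq> F" using e less.prems by blast
    have "card (F - insert e S) < card (F - S)"
      using e finF by (intro psubset_card_mono) auto
    then have IH: "F \<in> set_pmf (edge_process n x y (insert e S))"
      using less.hyps sub by blast
    have "F \<in> set_pmf (if is_tdg n x y (insert e S) then return_pmf (insert e S)
             else edge_process n x y (insert e S))"
      using IH ntdg[OF sub] by (simp del: edge_process.simps)
    moreover have "e \<in> set_pmf (pmf_of_set (addable n x y S))"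
      using eA ne finite_addable[of n x y S] by simp
    ultimately have "F \<in> set_pmf (pmf_of_set (addable n x y S) \<bind>
        (\<lambda>e. if is_tdg n x y (insert e S) then return_pmf (insert e S)
             else edge_process n x y (insert e S)))"
      unfolding set_bind_pmf by blast
    then show ?thesis
      using ne by (subst edge_process.simps) (simp del: edge_process.simps)
  qed
qed

lemma case_lt:
  fixes n x y :: nat
  assumes "1 \<le> x" and "x < y" and "y < n"
  shows "measure_pmf.prob (edge_process n x y {}) {E. \<not> is_tdg n x y E} > 0"
proof -
  define F where "F = {(a, b). y \<le> a \<and> a < b \<and> b \<le> n}"
  have Fsub: "F \<subseteq> all_pairs n" using assms by (auto simp: F_def all_pairs_def)
  have iniS: "{1..y} \<subseteq> initial_vertices n S" if "S \<subseteq> F" for S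
    using that assms by (auto simp: F_def initial_vertices_def)
  have terS: "insert n {1..<y} \<subseteq> terminal_vertices n S" if "S \<subseteq> F" for S
    using that assms by (auto simp: F_def terminal_vertices_def)
  have fi: "finite (initial_vertices n S)" for S by (auto simp: initial_vertices_def)
  have ft: "finite (terminal_vertices n S)" for S by (auto simp: terminal_vertices_def)
  have ci: "y \<le> card (initial_vertices n S)" if "S \<subseteq> F" for S
    using card_mono[OF fi iniS[OF that]] by simp
  have ct: "y \<le> card (terminal_vertices n S)" if "S \<subseteq> F" for S
  proof -
    have "card (insert n {1..<y}) = y" using assms by simp
    then show ?thesis using card_mono[OF ft terS[OF that]] by simp
  qed
  have add: "e \<in> addable n x y S" if "S \<subseteq> F" "e \<in> F" "e \<notin> S" for S e
  proof -
    have "insert e S \<subseteq> F" using that by blast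
    then show ?thesis using ci ct that Fsub assms unfolding addable_def
      by (auto simp: addable_def intro: order_trans less_imp_le_nat)
  qed
  have ntdg: "\<not> is_tdg n x y S" if "S \<subseteq> F" for S
    using ci[OF that] assms unfolding is_tdg_def by simp
  have stuck: "addable n x y F = {}"
  proof (rule ccontr)
    assume "addable n x y F \<noteq> {}"
    then obtain a b where ab: "(a, b) \<in> addable n x y F" by auto
    then have ab1: "(a, b) \<in> all_pairs n" "(a, b) \<notin> F"
      and ab2: "y \<le> card (terminal_vertices n (insert (a, b) F))"
      by (auto simp: addable_def)
    have alt: "a < y" "1 \<le> a" using ab1 by (auto simp: F_def all_pairs_def)
    have "terminal_vertices n (insert (a, b) F) \<subseteq> insert n ({1..<y} - {a})"
    proof
      fix v assume v: "v \<in> terminal_vertices n (insert (a, b) F)"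
      then have "v \<noteq> a" "1 \<le> v" "v \<le> n" by (auto simp: terminal_vertices_def)
      moreover have "\<not> (y \<le> v \<and> v < n)"
      proof
        assume "y \<le> v \<and> v < n"
        then have "(v, n) \<in> F" by (auto simp: F_def)
        then show False using v by (auto simp: terminal_vertices_def)
      qed
      ultimately show "v \<in> insert n ({1..<y} - {a})" by auto
    qed
    then have "card (terminal_vertices n (insert (a, b) F)) \<le> card (insert n ({1..<y} - {a}))"
      by (intro card_mono) auto
    also have "\<dots> \<le> Suc (card ({1..<y} - {a}))" by (rule card_insert_le_m1) auto
    also have "\<dots> = y - 1" using alt by simp
    finally show False using ab2 alt by simp
  qed
  have Fin: "F \<in> set_pmf (edge_process n x y {})"
    using reach[OF Fsub add ntdg stuck] by blast
  then show ?thesis using ntdg[of F] by (intro measure_pmf_posI[OF Fin]) simp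
qed

lemma case_gt:
  fixes n x y :: nat
  assumes "1 \<le> y" and "y < x" and "x < n"
  shows "measure_pmf.prob (edge_process n x y {}) {E. \<not> is_tdg n x y E} > 0"
proof -
  define M where "M = n + 1 - x"
  have M: "2 \<le> M" "M \<le> n" "n - M + 1 = x" using assms by (auto simp: M_def)
  define F where "F = {(a, b). 1 \<le> a \<and> a < b \<and> b \<le> M}"
  have Fsub: "F \<subseteq> all_pairs n" using M by (auto simp: F_def all_pairs_def)
  have iniS: "insert 1 {M<..n} \<subseteq> initial_vertices n S" if "S \<subseteq> F" for S
    using that M by (auto simp: F_def initial_vertices_def)
  have terS: "{M..n} \<subseteq> terminal_vertices n S" if "S \<subseteq> F" for S
    using that M by (auto simp: F_def terminal_vertices_def)
  have fi: "finite (initial_vertices n S)" for S by (auto simp: initial_vertices_def)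
  have ft: "finite (terminal_vertices n S)" for S by (auto simp: terminal_vertices_def)
  have ci: "x \<le> card (initial_vertices n S)" if "S \<subseteq> F" for S
  proof -
    have "card (insert 1 {M<..n}) = x" using M by simp
    then show ?thesis using card_mono[OF fi iniS[OF that]] by simp
  qed
  have ct: "x \<le> card (terminal_vertices n S)" if "S \<subseteq> F" for S
  proof -
    have "card {M..n} = x" using M by simp
    then show ?thesis using card_mono[OF ft terS[OF that]] by simp
  qed
  have add: "e \<in> addable n x y S" if "S \<subseteq> F" "e \<in> F" "e \<notin> S" for S e
  proof -
    have "insert e S \<subseteq> F" using that by blast
    then show ?thesis using ci ct that Fsub assms unfolding addable_def
      by (auto simp: addable_def intro: order_trans less_imp_le_nat)
  qed
  have ntdg: "\<not> is_tdg n x y S" if "S \<subseteq> F" for S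
    using ct[OF that] assms unfolding is_tdg_def by simp
  have stuck: "addable n x y F = {}"
  proof (rule ccontr)
    assume "addable n x y F \<noteq> {}"
    then obtain a b where ab: "(a, b) \<in> addable n x y F" by auto
    then have ab1: "(a, b) \<in> all_pairs n" "(a, b) \<notin> F"
      and ab2: "x \<le> card (initial_vertices n (insert (a, b) F))"
      by (auto simp: addable_def)
    have alt: "M < b" "b \<le> n" using ab1 by (auto simp: F_def all_pairs_def)
    have "initial_vertices n (insert (a, b) F) \<subseteq> insert 1 ({M<..n} - {b})"
    proof
      fix v assume v: "v \<in> initial_vertices n (insert (a, b) F)"
      then have "v \<noteq> b" "1 \<le> v" "v \<le> n" by (auto simp: initial_vertices_def)
      moreover have "\<not> (1 < v \<and> v \<le> M)"
      proof
        assume "1 < v \<and> v \<le> M"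
        then have "(1, v) \<in> F" by (auto simp: F_def)
        then show False using v by (auto simp: initial_vertices_def)
      qed
      ultimately show "v \<in> insert 1 ({M<..n} - {b})" by auto
    qed
    then have "card (initial_vertices n (insert (a, b) F)) \<le> card (insert 1 ({M<..n} - {b}))"
      by (intro card_mono) auto
    also have "\<dots> \<le> Suc (card ({M<..n} - {b}))" by (rule card_insert_le_m1) auto
    also have "\<dots> = x - 1" using alt M by simp
    finally show False using ab2 assms by simp
  qed
  have Fin: "F \<in> set_pmf (edge_process n x y {})"
    using reach[OF Fsub add ntdg stuck] by blast
  then show ?thesis using ntdg[of F] by (intro measure_pmf_posI[OF Fin]) simp
qed

theorem mainTheorem9:
  fixes n x y :: nat
  assumes "1 \<le> x" and "1 \<le> y" and "x \<noteq> y" and "max x y < n"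
  shows "measure_pmf.prob (edge_process n x y {}) {E. \<not> is_tdg n x y E} > 0"
proof (cases "x < y")
  case True
  then show ?thesis using case_lt assms by simp
next
  case False
  then show ?thesis using case_gt assms by simp
qed

end
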